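(* If $(S,K,I)$ is a split graph, then the factor graph $\Phi(S)$ cannot contain an induced path $v_1v_2v_3v_4$ with $\sigma_{23}=1$ and $d_1\leq d_2\leq d_4$.
   Context: A split graph $(S,K,I)$ is a graph $S$ together with a fixed partition $V(S)=K\dot\cup I$, where $K$ is a clique and $I$ is an independent set. For a vertex $v_i$ of $S$, $N_i$ denotes its open neighborhood in $S$ and $d_i=|N_i|$; $\eta_{uv}=|N_u\cap N_v|$. The factor graph $\Phi(S)$ is the loopless multigraph with vertex set $I$ in which, for distinct $u,v\in I$, there is one edge joining $u$ and $v$ for each 2-switch of $S$ acting on $u$ and $v$ (a 2-switch replaces edges $ab,cd$ with $ac,bd$ when $ab,cd\in E(S)$ and $ac,bd\notin E(S)$); equivalently, the multiplicity of $uv$ is $\sigma_{uv}=(d_u-\eta_{uv})(d_v-\eta_{uv})$, and $u,v$ are adjacent iff $\sigma_{uv}>0$; $\sigma_{ij}$ denotes $\sigma_{v_iv_j}$. An induced path in $\Phi(S)$ consists of distinct vertices with consecutive ones adjacent and no other pair adjacent (multiplicities ignored). *)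

theory Defs
  imports Main
begin

definition simple_graph :: "'a set \<Rightarrow> ('a \<Rightarrow> 'a \<Rightarrow> bool) \<Rightarrow> bool" where
  "simple_graph V E \<longleftrightarrow> finite V \<and> (\<forall>x y. E x y \<longrightarrow> E y x) \<and> (\<forall>x. \<not> E x x)
     \<and> (\<forall>x y. E x y \<longrightarrow> x \<in> V \<and> y \<in> V)"

definition split_graph :: "'a set \<Rightarrow> ('a \<Rightarrow> 'a \<Rightarrow> bool) \<Rightarrow> 'a set \<Rightarrow> 'a set \<Rightarrow> bool" where
  "split_graph V E K I \<longleftrightarrow> simple_graph V E \<and> K \<union> I = V \<and> K \<inter> I = {}
     \<and> (\<forall>x\<in>K. \<forall>y\<in>K. x \<noteq> y \<longrightarrow> E x y)
     \<and> (\<forall>x\<in>I. \<forall>y\<in>I. \<not> E x y)"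

definition nbhd :: "'a set \<Rightarrow> ('a \<Rightarrow> 'a \<Rightarrow> bool) \<Rightarrow> 'a \<Rightarrow> 'a set" where
  "nbhd V E v = {w \<in> V. E v w}"

definition deg :: "'a set \<Rightarrow> ('a \<Rightarrow> 'a \<Rightarrow> bool) \<Rightarrow> 'a \<Rightarrow> nat" where
  "deg V E v = card (nbhd V E v)"

definition eta :: "'a set \<Rightarrow> ('a \<Rightarrow> 'a \<Rightarrow> bool) \<Rightarrow> 'a \<Rightarrow> 'a \<Rightarrow> nat" where
  "eta V E u v = card (nbhd V E u \<inter> nbhd V E v)"

text \<open>Multiplicity of the edge uv in the factor graph.\<close>
definition sigma :: "'a set \<Rightarrow> ('a \<Rightarrow> 'a \<Rightarrow> bool) \<Rightarrow> 'a \<Rightarrow> 'a \<Rightarrow> nat" where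
  "sigma V E u v = (deg V E u - eta V E u v) * (deg V E v - eta V E u v)"

text \<open>Adjacency in the factor graph Phi(S) (vertex set I), multiplicities ignored.\<close>
definition factor_adj :: "'a set \<Rightarrow> ('a \<Rightarrow> 'a \<Rightarrow> bool) \<Rightarrow> 'a set \<Rightarrow> 'a \<Rightarrow> 'a \<Rightarrow> bool" where
  "factor_adj V E I u v \<longleftrightarrow> u \<in> I \<and> v \<in> I \<and> u \<noteq> v \<and> sigma V E u v > 0"

definition factor_induced_P4 :: "'a set \<Rightarrow> ('a \<Rightarrow> 'a \<Rightarrow> bool) \<Rightarrow> 'a set \<Rightarrow> 'a \<Rightarrow> 'a \<Rightarrow> 'a \<Rightarrow> 'a \<Rightarrow> bool" where
  "factor_induced_P4 V E I v1 v2 v3 v4 \<longleftrightarrow>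
     v1 \<in> I \<and> v2 \<in> I \<and> v3 \<in> I \<and> v4 \<in> I \<and> distinct [v1, v2, v3, v4]
     \<and> factor_adj V E I v1 v2 \<and> factor_adj V E I v2 v3 \<and> factor_adj V E I v3 v4
     \<and> \<not> factor_adj V E I v1 v3 \<and> \<not> factor_adj V E I v1 v4 \<and> \<not> factor_adj V E I v2 v4"

end

theory Submission
  imports Defs
begin

lemma sub_of_card:
  assumes "finite A" "finite B" "B \<subseteq> A \<or> A \<subseteq> B" "card A \<le> card B"
  shows "A \<subseteq> B"
proof (cases "A \<subseteq> B")
  case False
  then have "B \<subseteq> A" using assms by blast
  moreover have "card B = card A" using card_mono[OF assms(1) \<open>B \<subseteq> A\<close>] assms(4) by simp
  ultimately show ?thesis using card_subset_eq[OF assms(1)] by blast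
qed

lemma core:
  assumes f: "finite N1" "finite N2" "finite N3" "finite N4"
    and a12: "\<not> N1 \<subseteq> N2" and b: "N3 - N2 = {b}" and a34: "\<not> N3 \<subseteq> N4"
    and c13: "N1 \<subseteq> N3 \<or> N3 \<subseteq> N1" and c14: "N1 \<subseteq> N4 \<or> N4 \<subseteq> N1"
    and c24: "N2 \<subseteq> N4 \<or> N4 \<subseteq> N2"
    and d: "card N1 \<le> card N2" "card N2 \<le> card N4"
  shows False
proof -
  have 24: "N2 \<subseteq> N4" using sub_of_card[of N2 N4] f c24 d by blast
  have 14: "N1 \<subseteq> N4" using sub_of_card[of N1 N4] f c14 d by auto
  show False
  proof (cases "N1 \<subseteq> N3")
    case True
    obtain x where "x \<in> N1" "x \<notin> N2" using a12 by blast
    then have "x \<in> N3 - N2" using True by blast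
    then have "b \<in> N1" using b \<open>x \<in> N1\<close> by simp
    have "N3 \<subseteq> N4"
    proof
      fix y assume "y \<in> N3"
      show "y \<in> N4"
      proof (cases "y \<in> N2")
        case False
        then have "y = b" using b \<open>y \<in> N3\<close> by blast
        then show ?thesis using \<open>b \<in> N1\<close> 14 by blast
      qed (use 24 in blast)
    qed
    then show False using a34 by blast
  next
    case False
    then have "N3 \<subseteq> N1" using c13 by blast
    then show False using 14 a34 by blast
  qed
qed

lemma dmeta:
  assumes "finite V"
  shows "deg V E u - eta V E u v = card (nbhd V E u - nbhd V E v)"
  unfolding deg_def eta_def
  by (metis assms card_Diff_subset_Int finite_Int nbhd_def finite_subset mem_Collect_eq subsetI)

lemma sig_eq:
  assumes "finite V"
  shows "sigma V E u v = card (nbhd V E u - nbhd V E v) * card (nbhd V E v - nbhd V E u)"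
  unfolding sigma_def using dmeta[OF assms, of E u v] dmeta[OF assms, of E v u]
  by (simp add: eta_def Int_commute)

lemma fin_nb: "finite V \<Longrightarrow> finite (nbhd V E u)"
  unfolding nbhd_def by simp

lemma adj_iff:
  assumes "finite V"
  shows "sigma V E u v > 0 \<longleftrightarrow> \<not> nbhd V E u \<subseteq> nbhd V E v \<and> \<not> nbhd V E v \<subseteq> nbhd V E u"
  using sig_eq[OF assms] fin_nb[OF assms]
  by (simp add: card_gt_0_iff)

lemma one_iff:
  assumes "finite V" "sigma V E u v = 1"
  shows "\<exists>b. nbhd V E v - nbhd V E u = {b}"
  using sig_eq[OF assms(1), of E u v] assms(2)
  by (simp add: card_1_singleton_iff)

theorem lemma4p5:
  fixes V K I :: "'a set" and E :: "'a \<Rightarrow> 'a \<Rightarrow> bool"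
  assumes "split_graph V E K I"
  shows "\<not> (\<exists>v1 v2 v3 v4. factor_induced_P4 V E I v1 v2 v3 v4
              \<and> sigma V E v2 v3 = 1
              \<and> deg V E v1 \<le> deg V E v2 \<and> deg V E v2 \<le> deg V E v4)"
proof
  assume "\<exists>v1 v2 v3 v4. factor_induced_P4 V E I v1 v2 v3 v4
              \<and> sigma V E v2 v3 = 1
              \<and> deg V E v1 \<le> deg V E v2 \<and> deg V E v2 \<le> deg V E v4"
  then obtain v1 v2 v3 v4 where P: "factor_induced_P4 V E I v1 v2 v3 v4"
    and s: "sigma V E v2 v3 = 1" and d: "deg V E v1 \<le> deg V E v2" "deg V E v2 \<le> deg V E v4"
    by blast
  have fV: "finite V" using assms unfolding split_graph_def simple_graph_def by blast
  obtain b where b: "nbhd V E v3 - nbhd V E v2 = {b}" using one_iff[OF fV s] by blast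
  have A: "\<And>u v. factor_adj V E I u v \<Longrightarrow> \<not> nbhd V E u \<subseteq> nbhd V E v \<and> \<not> nbhd V E v \<subseteq> nbhd V E u"
    unfolding factor_adj_def using adj_iff[OF fV] by blast
  have N: "\<And>u v. u \<in> I \<Longrightarrow> v \<in> I \<Longrightarrow> u \<noteq> v \<Longrightarrow> \<not> factor_adj V E I u v \<Longrightarrow> nbhd V E u \<subseteq> nbhd V E v \<or> nbhd V E v \<subseteq> nbhd V E u"
    unfolding factor_adj_def using adj_iff[OF fV] by blast
  show False
    apply (rule core[of "nbhd V E v1" "nbhd V E v2" "nbhd V E v3" "nbhd V E v4" b])
    using fin_nb[OF fV] A N P b d unfolding factor_induced_P4_def deg_def by auto
qed

end
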